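(* Let $\beta$ be a nonzero real number and let $T_\beta\colon\mathbb{R}[x]\to\mathbb{R}[x]$ be the linear operator defined by $T_\beta[x^n]=H_n(\tfrac{\beta}{2}x)$ for all $n\ge0$. Then $$T_\beta=\sum_{n=0}^{\infty}H_n\!\left(\tfrac{\beta-1}{2}x\right)\frac{D^n}{n!},$$ i.e. the coefficient polynomials of $T_\beta$ are $Q_n(x)=H_n(\tfrac{\beta-1}{2}x)$. In particular, the coefficient polynomials of the transformation $x^n\mapsto H_n(x)$ have real interlacing roots.
   Context: $H_n$ denotes the $n$th physicist Hermite polynomial, $H_n(x)=n!\sum_{m=0}^{\lfloor n/2\rfloor}\frac{(-1)^m}{m!(n-2m)!}(2x)^{n-2m}$. $D=d/dx$. Every linear operator $T\colon\mathbb{C}[x]\to\mathbb{C}[x]$ has a unique representation $T=\sum_{k=0}^\infty \frac{Q_k(x)}{k!}D^k$ with polynomials $Q_k(x)$ (the coefficient polynomials of $T$), where the sum acts finitely on each polynomial. *)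

theory Defs
  imports "HOL-Computational_Algebra.Polynomial"
begin

definition hermite :: "nat \<Rightarrow> real poly" where
  "hermite n = (\<Sum>m\<le>n div 2.
      smult (fact n * (-1) ^ m / (fact m * fact (n - 2 * m)) * 2 ^ (n - 2 * m))
            (monom 1 (n - 2 * m)))"

definition T_beta :: "real \<Rightarrow> real poly \<Rightarrow> real poly" where
  "T_beta \<beta> p = (\<Sum>k\<le>degree p. smult (coeff p k) (pcompose (hermite k) [:0, \<beta> / 2:]))"

definition roots_interlace :: "real poly \<Rightarrow> real poly \<Rightarrow> bool" where
  "roots_interlace f g \<longleftrightarrow> f \<noteq> 0 \<and> g \<noteq> 0 \<and> degree g = degree f + 1 \<and>
     (\<exists>a b. length a = degree f \<and> length b = degree g \<and> sorted a \<and> sorted b \<and>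
        f = smult (lead_coeff f) (\<Prod>x\<leftarrow>a. [:- x, 1:]) \<and>
        g = smult (lead_coeff g) (\<Prod>x\<leftarrow>b. [:- x, 1:]) \<and>
        (\<forall>i<degree f. b ! i \<le> a ! i \<and> a ! i \<le> b ! Suc i))"

end

theory Submission
  imports Defs
begin


definition hc :: "nat \<Rightarrow> nat \<Rightarrow> real" where
  "hc n j = (if j \<le> n \<and> even (n - j) then
     fact n * (-1) ^ ((n - j) div 2) / (fact ((n - j) div 2) * fact j) * 2 ^ j else 0)"

lemma coeff_hermite: "coeff (hermite n) j = hc n j"
proof -
  have "coeff (hermite n) j = (\<Sum>m\<le>n div 2.
      (if m = (n - j) div 2 \<and> j \<le> n \<and> even (n - j) then
        fact n * (-1) ^ m / (fact m * fact (n - 2 * m)) * 2 ^ (n - 2 * m) else 0))"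
    unfolding hermite_def coeff_sum
    apply (intro sum.cong refl)
    apply (auto simp: coeff_monom)
    apply presburger+
    done
  also have "\<dots> = hc n j"
  proof (cases "j \<le> n \<and> even (n - j)")
    case True
    then have "n - 2 * ((n - j) div 2) = j" by presburger
    moreover have "(n - j) div 2 \<le> n div 2" by (simp add: div_le_mono)
    ultimately show ?thesis using True
      by (simp add: hc_def)
  next
    case False
    then have "(\<Sum>m\<le>n div 2.
      (if m = (n - j) div 2 \<and> j \<le> n \<and> even (n - j) then
        fact n * (-1) ^ m / (fact m * fact (n - 2 * m)) * 2 ^ (n - 2 * m) else (0::real))) = 0"
      by (intro sum.neutral) auto
    then show ?thesis using False by (simp add: hc_def)
  qed
  finally show ?thesis .
qed

lemma hc_deriv: "real (Suc j) * hc (Suc n) (Suc j) = 2 * real (Suc n) * hc n j"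
proof (cases "j \<le> n \<and> even (n - j)")
  case True
  then obtain m where n: "n = j + 2 * m" by (metis evenE le_add_diff_inverse)
  show ?thesis unfolding hc_def n by (simp add: fact_Suc divide_simps; simp add: algebra_simps)
next
  case False
  then show ?thesis unfolding hc_def by auto
qed

lemma hc_rec: "hc (Suc (Suc n)) j = (if j = 0 then 0 else 2 * hc (Suc n) (j - 1)) - 2 * real (Suc n) * hc n j"
proof (cases "j \<le> Suc (Suc n) \<and> even (Suc (Suc n) - j)")
  case True
  then obtain m where n: "Suc (Suc n) = j + 2 * m" by (metis evenE le_add_diff_inverse)
  show ?thesis
  proof (cases j)
    case 0
    then obtain k where m: "m = Suc k" using n by (cases m) auto
    have nn: "n = 2 * k" using n 0 m by simp
    show ?thesis unfolding hc_def nn 0 by (simp add: fact_Suc divide_simps; simp add: algebra_simps)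
  next
    case (Suc i)
    show ?thesis
    proof (cases m)
      case 0
      have nn: "j = Suc (Suc n)" using n 0 by simp
      show ?thesis unfolding hc_def nn by (simp add: fact_Suc divide_simps; simp add: algebra_simps)
    next
      case (Suc k)
      have nn: "n = i + 2 * k + 1" using n Suc \<open>j = Suc i\<close> by simp
      have "even (Suc n - i)" using nn by presburger
      moreover have "\<not> (Suc i \<le> n \<and> even (n - Suc i)) \<or> True" by simp
      show ?thesis unfolding hc_def nn \<open>j = Suc i\<close> by (simp add: fact_Suc divide_simps; simp add: algebra_simps)
    qed
  qed
next
  case False
  then show ?thesis unfolding hc_def by (auto simp: Suc_diff_le)
qed

lemma hermite_0: "hermite 0 = 1"
  by (simp add: hermite_def)

lemma hermite_1: "hermite 1 = [:0, 2:]"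
  by (rule poly_eqI) (simp add: coeff_hermite hc_def coeff_pCons split: nat.split)

lemma pderiv_hermite_Suc: "pderiv (hermite (Suc n)) = smult (2 * real (Suc n)) (hermite n)"
  by (rule poly_eqI, unfold coeff_pderiv coeff_smult coeff_hermite, rule hc_deriv)

lemma pderiv_hermite_0: "pderiv (hermite 0) = 0"
  by (simp add: hermite_0)

lemma X2_mult: "[:0, c:] * p = pCons 0 (smult c p)"
  by (simp add: mult_pCons_left)

lemma hermite_rec: "hermite (Suc (Suc n)) = [:0, 2:] * hermite (Suc n) - smult (2 * real (Suc n)) (hermite n)"
  apply (rule poly_eqI)
  apply (simp only: X2_mult coeff_diff coeff_smult coeff_pCons coeff_hermite hc_rec)
  apply (simp add: coeff_hermite split: nat.split)
  done

lemma pderiv_sum: "pderiv (sum f A) = (\<Sum>x\<in>A. pderiv (f x))"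
  by (induct A rule: infinite_finite_induct) (auto simp: pderiv_add)

lemma smult_sum2: "smult c (sum f A) = (\<Sum>x\<in>A. smult c (f x))"
  by (induct A rule: infinite_finite_induct) (auto simp: smult_add_right)

definition F :: "real \<Rightarrow> nat \<Rightarrow> real poly" where
  "F a k = pcompose (hermite k) [:0, a:]"

definition TT :: "real \<Rightarrow> nat \<Rightarrow> real poly \<Rightarrow> real poly" where
  "TT a N p = (\<Sum>k\<le>N. smult (coeff p k) (F a k))"

definition SS :: "real \<Rightarrow> nat \<Rightarrow> real poly \<Rightarrow> real poly" where
  "SS b N p = (\<Sum>n\<le>N. smult (1 / fact n) (F b n * (pderiv ^^ n) p))"

lemma pderiv_F_Suc: "pderiv (F a (Suc k)) = smult (2 * real (Suc k) * a) (F a k)"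
  by (simp add: F_def pderiv_pcompose pderiv_hermite_Suc pcompose_smult pderiv_pCons mult_ac)

lemma pderiv_F_0: "pderiv (F a 0) = 0"
  by (simp add: F_def hermite_0 one_pCons pderiv_pCons)

lemma pderiv_funpow_zero: "degree p < n \<Longrightarrow> (pderiv ^^ n) (p :: real poly) = 0"
proof (induction n arbitrary: p)
  case 0 then show ?case by simp
next
  case (Suc n)
  show ?case
  proof (cases "degree p = 0")
    case True
    then obtain c where "p = [:c:]" by (metis degree_eq_zeroE)
    then have "pderiv p = 0" by (simp add: pderiv_pCons)
    then have "(pderiv ^^ n) (pderiv p) = 0"
      by (induction n) (auto simp: pderiv_0)
    then show ?thesis by (simp add: funpow_swap1)
  next
    case False
    then have "degree (pderiv p) < n" using Suc.prems by (simp add: degree_pderiv)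
    then show ?thesis using Suc.IH by (simp add: funpow_swap1)
  qed
qed

lemma coeff_pderiv_funpow:
  "coeff ((pderiv ^^ n) (p :: real poly)) k = fact (k + n) / fact k * coeff p (k + n)"
proof (induction n arbitrary: k)
  case 0 then show ?case by simp
next
  case (Suc n)
  have "coeff ((pderiv ^^ Suc n) p) k = real (Suc k) * coeff ((pderiv ^^ n) p) (Suc k)"
    by (simp add: coeff_pderiv)
  also have "\<dots> = fact (k + Suc n) / fact k * coeff p (k + Suc n)"
    using Suc.IH[of "Suc k"] by (simp add: fact_Suc divide_simps mult_ac)
  finally show ?case .
qed

lemma TT_ext: "degree p \<le> N \<Longrightarrow> TT a N p = TT a (degree p) p"
  unfolding TT_def
  by (rule sum.mono_neutral_right) (auto simp: coeff_eq_0)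

lemma SS_ext: "degree p \<le> N \<Longrightarrow> SS b N p = SS b (degree p) p"
  unfolding SS_def
  by (rule sum.mono_neutral_right) (auto simp: pderiv_funpow_zero)

lemma pderiv_TT: "pderiv (TT a (Suc N) p) = smult (2 * a) (TT a N (pderiv p))"
proof -
  have "pderiv (TT a (Suc N) p) = (\<Sum>k\<le>N. smult (coeff p (Suc k)) (pderiv (F a (Suc k))))"
    unfolding TT_def by (simp add: sum.atMost_Suc_shift pderiv_add pderiv_sum pderiv_smult pderiv_F_0 del: sum.atMost_Suc)
  also have "\<dots> = smult (2 * a) (TT a N (pderiv p))"
    unfolding TT_def smult_sum2 pderiv_F_Suc
    apply (intro sum.cong refl)
    subgoal for k
    proof -
      have sc: "coeff p (Suc k) * (2 * real (Suc k) * a) = 2 * a * (real (Suc k) * coeff p (Suc k))"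
        by (simp add: algebra_simps)
      show ?thesis by (simp only: smult_smult coeff_pderiv sc)
    qed
    done
  finally show ?thesis .
qed

lemma pderiv_SS: "pderiv (SS b (Suc N) p) = smult (2 * b) (SS b N (pderiv p)) + SS b (Suc N) (pderiv p)"
proof -
  have "pderiv (SS b (Suc N) p) = (\<Sum>n\<le>Suc N. smult (1 / fact n) (pderiv (F b n) * (pderiv ^^ n) p))
     + (\<Sum>n\<le>Suc N. smult (1 / fact n) (F b n * (pderiv ^^ n) (pderiv p)))"
    unfolding SS_def pderiv_sum pderiv_smult pderiv_mult
    by (simp add: sum.distrib smult_add_right funpow_swap1 algebra_simps)
  also have "(\<Sum>n\<le>Suc N. smult (1 / fact n) (pderiv (F b n) * (pderiv ^^ n) p))
     = (\<Sum>n\<le>N. smult (1 / fact (Suc n)) (pderiv (F b (Suc n)) * (pderiv ^^ Suc n) p))"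
    by (simp add: sum.atMost_Suc_shift pderiv_F_0 del: sum.atMost_Suc)
  also have "\<dots> = smult (2 * b) (SS b N (pderiv p))"
    unfolding SS_def smult_sum2 pderiv_F_Suc
    apply (intro sum.cong refl)
    subgoal for n
    proof -
      have sc: "1 / fact (Suc n) * (2 * real (Suc n) * b) = 2 * b * (1 / (fact n :: real))"
        by (simp add: fact_Suc divide_simps)
      show ?thesis
        by (simp only: funpow_Suc_right o_apply mult_smult_left smult_smult sc)
    qed
    done
  finally show ?thesis unfolding SS_def by simp
qed

lemma poly_TT_0: "poly (TT a N p) 0 = (\<Sum>k\<le>N. coeff p k * poly (hermite k) 0)"
  unfolding TT_def F_def by (simp add: poly_sum poly_pcompose)

lemma poly_SS_0: "poly (SS b N p) 0 = (\<Sum>k\<le>N. coeff p k * poly (hermite k) 0)"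
  unfolding SS_def F_def poly_sum
  by (intro sum.cong refl) (simp add: poly_sum poly_pcompose poly_0_coeff_0[of "(pderiv ^^ _) p"] coeff_pderiv_funpow)

lemma eq_by_deriv:
  fixes p q :: "real poly"
  assumes "pderiv p = pderiv q" "poly p 0 = poly q 0"
  shows "p = q"
proof -
  have "pderiv (p - q) = 0" using assms by (simp add: pderiv_diff)
  then obtain h where h: "p - q = [:h:]" using pderiv_iszero by blast
  then have "poly (p - q) 0 = h" by simp
  then have "h = 0" using assms by simp
  then show ?thesis using h by simp
qed

lemma TS:
  assumes ab: "2 * b + 1 = 2 * a"
  shows "TT a (degree p) p = SS b (degree p) p"
proof (induction "degree p" arbitrary: p rule: less_induct)
  case less
  define p' where "p' = pderiv p"
  have IH: "TT a (degree p') p' = SS b (degree p') p'"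
  proof (cases "degree p = 0")
    case True
    then obtain c where "p = [:c:]" by (metis degree_eq_zeroE)
    then have "p' = 0" by (simp add: p'_def pderiv_pCons)
    then show ?thesis by (simp add: TT_def SS_def)
  next
    case False
    then have "degree p' < degree p" by (simp add: p'_def degree_pderiv)
    then show ?thesis using less by blast
  qed
  have dp: "degree p' \<le> degree p" by (simp add: p'_def degree_pderiv)
  have "pderiv (TT a (degree p) p) = pderiv (TT a (Suc (degree p)) p)"
    by (subst TT_ext[of p "Suc (degree p)"]) simp_all
  also have "\<dots> = smult (2 * a) (TT a (degree p') p')"
    using TT_ext[OF dp] by (simp add: pderiv_TT p'_def)
  also have "\<dots> = smult (2 * a) (SS b (degree p') p')" using IH by simp
  also have "\<dots> = smult (2 * b) (SS b (degree p) p') + SS b (Suc (degree p)) p'"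
    using SS_ext[OF dp] SS_ext[of p' "Suc (degree p)"] dp by (simp add: ab[symmetric] smult_add_left)
  also have "\<dots> = pderiv (SS b (Suc (degree p)) p)"
    by (simp add: pderiv_SS p'_def)
  also have "\<dots> = pderiv (SS b (degree p) p)"
    by (subst SS_ext[of p "Suc (degree p)"]) simp_all
  finally show ?case
    by (rule eq_by_deriv) (simp add: poly_TT_0 poly_SS_0)
qed



definition LF :: "real list \<Rightarrow> real poly" where
  "LF xs = prod_list (map (\<lambda>x. [:-x, 1:]) xs)"

definition P :: "nat \<Rightarrow> real poly" where
  "P n = pcompose (hermite n) [:0, 1/2:]"

lemma P_0: "P 0 = 1"
  by (simp add: P_def hermite_0 one_pCons pcompose_pCons)

lemma P_1: "P (Suc 0) = [:0, 1:]"
  unfolding P_def using hermite_1 by (simp add: pcompose_pCons)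

lemma P_rec: "P (Suc (Suc n)) = [:0, 1:] * P (Suc n) - smult (2 * real (Suc n)) (P n)"
  by (simp add: P_def hermite_rec pcompose_diff pcompose_mult pcompose_smult pcompose_pCons)

lemma P_odd: "poly (P n) (-x) = (-1) ^ n * poly (P n) x"
proof -
  have "\<forall>x. poly (P n) (-x) = (-1) ^ n * poly (P n) x \<and> poly (P (Suc n)) (-x) = (-1) ^ Suc n * poly (P (Suc n)) x"
  proof (induction n)
    case 0 then show ?case by (simp add: P_0 P_1)
  next
    case (Suc n)
    then show ?case by (simp add: P_rec algebra_simps)
  qed
  then show ?thesis by blast
qed

lemma poly_LF: "poly (LF xs) y = prod_list (map (\<lambda>x. y - x) xs)"
  by (induct xs) (auto simp: LF_def algebra_simps)

lemma LF_Cons: "LF (x # xs) = [:-x, 1:] * LF xs"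
  by (simp add: LF_def)

lemma LF_monic: "lead_coeff (LF xs) = 1 \<and> degree (LF xs) = length xs"
proof (induct xs)
  case Nil then show ?case by (simp add: LF_def)
next
  case (Cons x xs)
  then have "LF xs \<noteq> 0" by auto
  have nz: "[:-x, 1:] \<noteq> 0" by simp
  have l1: "lead_coeff [:-x, 1:] = 1" and d1: "degree [:-x, 1:] = 1" by simp_all
  have "lead_coeff (LF (x # xs)) = 1 * lead_coeff (LF xs)"
    by (simp only: LF_Cons lead_coeff_mult l1)
  moreover have "degree (LF (x # xs)) = 1 + degree (LF xs)"
    by (simp only: LF_Cons degree_mult_eq[OF nz \<open>LF xs \<noteq> 0\<close>] d1)
  moreover have h1: "lead_coeff (LF xs) = 1" and h2: "degree (LF xs) = length xs" using Cons by auto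
  ultimately show ?case by (metis One_nat_def plus_1_eq_Suc length_Cons mult_1)
qed

lemma LF_root: "x \<in> set xs \<Longrightarrow> poly (LF xs) x = 0"
  by (induct xs) (auto simp: LF_Cons)

lemma LF_unique:
  "distinct c \<Longrightarrow> (\<forall>x\<in>set c. poly p x = 0) \<Longrightarrow> degree p = length c \<Longrightarrow> lead_coeff p = 1 \<Longrightarrow> p = LF c"
proof (induction c arbitrary: p)
  case Nil
  then have "degree p = 0" by simp
  then obtain h where "p = [:h:]" by (rule degree_eq_zeroE)
  then show ?case using Nil by (simp add: LF_def)
next
  case (Cons x c)
  have "[:-x, 1:] dvd p" using Cons.prems(2) by (simp add: poly_eq_0_iff_dvd)
  then obtain q where q: "p = [:-x, 1:] * q" by (elim dvdE)
  have p0: "p \<noteq> 0" using Cons.prems(4) by auto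
  then have q0: "q \<noteq> 0" using q by auto
  have nz: "[:-x, 1:] \<noteq> 0" by simp
  have "degree p = 1 + degree q" unfolding q by (simp only: degree_mult_eq[OF nz q0]) simp
  then have dq: "degree q = length c" using Cons.prems(3) by simp
  have "lead_coeff p = lead_coeff q" unfolding q by (simp only: lead_coeff_mult) simp
  then have lq: "lead_coeff q = 1" using Cons.prems(4) by simp
  have "\<forall>y\<in>set c. poly q y = 0"
  proof
    fix y assume y: "y \<in> set c"
    then have "y \<noteq> x" using Cons.prems(1) by auto
    moreover have "poly p y = 0" using Cons.prems(2) y by auto
    moreover have "poly p y = (y - x) * poly q y" unfolding q by (simp add: algebra_simps)
    ultimately show "poly q y = 0" by simp
  qed
  then have "q = LF c" using Cons.IH[of q] Cons.prems(1) dq lq by simp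
  then show ?case using q by (simp only: LF_Cons)
qed

lemma sign_LF:
  assumes s: "sorted_wrt (<) a" and i: "i \<le> length a"
    and lo: "0 < i \<Longrightarrow> a ! (i - 1) < y" and hi: "i < length a \<Longrightarrow> y < a ! i"
  shows "(-1) ^ (length a - i) * poly (LF a) y > 0"
proof -
  let ?n = "length a"
  have "poly (LF a) y = (\<Prod>j\<in>{0..<?n}. y - a ! j)"
    by (simp add: poly_LF prod.list_conv_set_nth)
  also have "\<dots> = (\<Prod>j\<in>{0..<i}. y - a ! j) * (\<Prod>j\<in>{i..<?n}. y - a ! j)"
    using i by (metis prod.atLeastLessThan_concat zero_le)
  finally have e: "poly (LF a) y = (\<Prod>j\<in>{0..<i}. y - a ! j) * (\<Prod>j\<in>{i..<?n}. y - a ! j)" .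
  have m: "(-1) ^ (?n - i) * (\<Prod>j\<in>{i..<?n}. y - a ! j) = (\<Prod>j\<in>{i..<?n}. a ! j - y)"
  proof -
    have "(\<Prod>j\<in>{i..<?n}. a ! j - y) = (\<Prod>j\<in>{i..<?n}. (-1) * (y - a ! j))" by simp
    also have "\<dots> = (-1) ^ (?n - i) * (\<Prod>j\<in>{i..<?n}. y - a ! j)"
      by (simp only: prod.distrib) simp
    finally show ?thesis by simp
  qed
  have p1: "(\<Prod>j\<in>{0..<i}. y - a ! j) > 0"
  proof (rule prod_pos)
    fix j assume j: "j \<in> {0..<i}"
    then have "a ! j \<le> a ! (i - 1)"
      using s i by (cases "j = i - 1") (auto simp: sorted_wrt_iff_nth_less less_imp_le)
    then show "0 < y - a ! j" using lo j by auto
  qed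
  have p2: "(\<Prod>j\<in>{i..<?n}. a ! j - y) > 0"
  proof (rule prod_pos)
    fix j assume j: "j \<in> {i..<?n}"
    then have "a ! i \<le> a ! j"
      using s by (cases "j = i") (auto simp: sorted_wrt_iff_nth_less less_imp_le)
    then show "0 < a ! j - y" using hi j by auto
  qed
  have "(-1) ^ (?n - i) * poly (LF a) y = (\<Prod>j\<in>{0..<i}. y - a ! j) * (\<Prod>j\<in>{i..<?n}. a ! j - y)"
    unfolding e m[symmetric] by (simp add: algebra_simps)
  then show ?thesis using p1 p2 by simp
qed

lemma roots_between:
  fixes p :: "real poly"
  assumes t: "\<forall>k<m. t k < t (Suc k)" and sg: "\<forall>k\<le>m. (-1) ^ (m - k) * poly p (t k) > 0"
  shows "\<exists>c. length c = m \<and> sorted_wrt (<) c \<and> (\<forall>k<m. t k < c ! k \<and> c ! k < t (Suc k))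
           \<and> (\<forall>x\<in>set c. poly p x = 0)"
proof -
  have "\<forall>k. \<exists>x. k < m \<longrightarrow> t k < x \<and> x < t (Suc k) \<and> poly p x = 0"
  proof (intro allI impI)
    fix k
    show "\<exists>x. k < m \<longrightarrow> t k < x \<and> x < t (Suc k) \<and> poly p x = 0"
    proof (cases "k < m")
      case True
      let ?s = "(-1::real) ^ (m - Suc k)"
      have mk: "m - k = Suc (m - Suc k)" using True by simp
      have A: "- ?s * poly p (t k) > 0" using sg True mk by (metis less_imp_le mult_minus1 power_Suc mult.assoc)
      have B: "?s * poly p (t (Suc k)) > 0" using sg True by (simp add: Suc_le_eq)
      have ss: "?s * ?s = 1" by (simp flip: power_add)
      have "(- ?s * poly p (t k)) * (?s * poly p (t (Suc k))) > 0" by (rule mult_pos_pos[OF A B])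
      then have "- (?s * ?s) * (poly p (t k) * poly p (t (Suc k))) > 0" by (simp add: algebra_simps)
      then have "poly p (t k) * poly p (t (Suc k)) < 0" using ss by simp
      then show ?thesis using poly_IVT t True by blast
    qed simp
  qed
  then obtain g where g: "\<And>k. k < m \<Longrightarrow> t k < g k \<and> g k < t (Suc k) \<and> poly p (g k) = 0"
    by metis
  define c where "c = map g [0..<m]"
  have "sorted_wrt (<) c"
    unfolding sorted_wrt_iff_nth_Suc_transp[OF transp_on_less] c_def
    using g by (auto intro: less_trans)
  then show ?thesis using g unfolding c_def by (intro exI[of _ "map g [0..<m]"]) auto
qed



lemma P_interlace:
  "\<exists>a b. length a = n \<and> length b = Suc n \<and> sorted_wrt (<) a \<and> sorted_wrt (<) b \<and>
     P n = LF a \<and> P (Suc n) = LF b \<and> (\<forall>i<n. b ! i < a ! i \<and> a ! i < b ! Suc i)"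
proof (induction n)
  case 0
  show ?case
    by (rule exI[of _ "[]"], rule exI[of _ "[0]"]) (simp add: P_0 P_1 LF_def)
next
  case (Suc n)
  then obtain a b where la: "length a = n" and lb: "length b = Suc n" and sa: "sorted_wrt (<) a"
    and sb: "sorted_wrt (<) b" and Pa: "P n = LF a" and Pb: "P (Suc n) = LF b"
    and il: "\<forall>i<n. b ! i < a ! i \<and> a ! i < b ! Suc i" by blast
  define p where "p = P (Suc (Suc n))"
  have prec: "p = [:0, 1:] * LF b + - smult (2 * real (Suc n)) (LF a)"
    unfolding p_def P_rec Pa Pb by simp
  have mb: "lead_coeff (LF b) = 1" "degree (LF b) = Suc n" using LF_monic[of b] lb by auto
  have ma: "degree (LF a) = n" using LF_monic[of a] la by auto
  have LFb0: "LF b \<noteq> 0" using mb by auto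
  have x0: "[:0, 1::real:] \<noteq> 0" by simp
  have d1: "degree ([:0, 1:] * LF b) = Suc (Suc n)"
    by (simp only: degree_mult_eq[OF x0 LFb0] mb) simp
  have l1: "lead_coeff ([:0, 1:] * LF b) = 1"
    using mb by (simp only: lead_coeff_mult) (metis lead_coeff_pCons(1) mult_1 one_neq_zero pCons_eq_0_iff pCons_one lead_coeff_1)
  have d2: "degree (- smult (2 * real (Suc n)) (LF a)) < Suc (Suc n)"
    using degree_smult_le[of "2 * real (Suc n)" "LF a"] ma by simp
  have dp: "degree p = Suc (Suc n)"
    unfolding prec using d1 d2 by (simp only: degree_add_eq_left)
  have lp: "lead_coeff p = 1"
  proof -
    have "coeff p (Suc (Suc n)) = coeff ([:0, 1:] * LF b) (Suc (Suc n)) + coeff (- smult (2 * real (Suc n)) (LF a)) (Suc (Suc n))"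
      unfolding prec by (simp only: coeff_add)
    also have "coeff (- smult (2 * real (Suc n)) (LF a)) (Suc (Suc n)) = 0"
      using d2 by (simp only: coeff_eq_0)
    finally show ?thesis using dp l1 d1 by simp
  qed
  have vb: "poly p (b ! i) = - (2 * real (Suc n)) * poly (LF a) (b ! i)" if "i \<le> n" for i
  proof -
    have "b ! i \<in> set b" using that lb by simp
    then have "poly (LF b) (b ! i) = 0" by (rule LF_root)
    then show ?thesis unfolding prec by (simp add: algebra_simps)
  qed
  have sgb: "(-1) ^ (n + 1 - i) * poly p (b ! i) > 0" if "i \<le> n" for i
  proof -
    have "(-1) ^ (length a - i) * poly (LF a) (b ! i) > 0"
    proof (rule sign_LF[OF sa])
      show "i \<le> length a" using that la by simp
      show "a ! (i - 1) < b ! i" if "0 < i"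
        using il \<open>i \<le> n\<close> that by (metis Suc_pred' diff_less less_le_trans zero_less_one)
      show "b ! i < a ! i" if "i < length a" using il that la by simp
    qed
    moreover have "n + 1 - i = Suc (n - i)" using that by simp
    moreover have "(-1) ^ (n + 1 - i) * poly p (b ! i) = 2 * real (Suc n) * ((-1) ^ (length a - i) * poly (LF a) (b ! i))"
      unfolding vb[OF that] la \<open>n + 1 - i = Suc (n - i)\<close> by (simp add: algebra_simps)
    ultimately show ?thesis by simp
  qed
  obtain N where N: "\<forall>x\<ge>N. poly p x \<ge> lead_coeff p"
    using poly_pinfty_gt_lc[of p] lp by auto
  define R where "R = max N (\<bar>b ! 0\<bar> + \<bar>b ! n\<bar> + 1)"
  have "R \<ge> N" unfolding R_def by simp
  then have "poly p R \<ge> lead_coeff p" using N by blast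
  then have R1: "poly p R > 0" using lp by linarith
  have R2: "(-1) ^ (Suc (Suc n)) * poly p (-R) > 0"
    using R1 P_odd[of "Suc (Suc n)" R] unfolding p_def by simp
  have R3: "b ! n < R" "- R < b ! 0" unfolding R_def by auto
  define t where "t k = (if k = 0 then - R else if k \<le> Suc n then b ! (k - 1) else R)" for k
  have tm: "\<forall>k<Suc (Suc n). t k < t (Suc k)"
  proof (intro allI impI)
    fix k assume k: "k < Suc (Suc n)"
    show "t k < t (Suc k)"
    proof (cases "k = 0")
      case True then show ?thesis using R3 by (simp add: t_def)
    next
      case False
      show ?thesis
      proof (cases "k = Suc n")
        case True then show ?thesis using R3 by (simp add: t_def)
      next
        case False
        then have "k - 1 < k" "k < length b" using \<open>k \<noteq> 0\<close> k lb by auto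
        then have "b ! (k - 1) < b ! k" using sb by (simp add: sorted_wrt_iff_nth_less)
        then show ?thesis using False \<open>k \<noteq> 0\<close> k by (simp add: t_def)
      qed
    qed
  qed
  have ts: "\<forall>k\<le>Suc (Suc n). (-1) ^ (Suc (Suc n) - k) * poly p (t k) > 0"
  proof (intro allI impI)
    fix k assume k: "k \<le> Suc (Suc n)"
    show "(-1) ^ (Suc (Suc n) - k) * poly p (t k) > 0"
    proof (cases "k = 0")
      case True then show ?thesis using R2 by (simp add: t_def)
    next
      case False
      show ?thesis
      proof (cases "k = Suc (Suc n)")
        case True then show ?thesis using R1 by (simp add: t_def)
      next
        case False
        then have "k - 1 \<le> n" "Suc (Suc n) - k = n + 1 - (k - 1)" using \<open>k \<noteq> 0\<close> k by auto
        then show ?thesis using sgb[of "k - 1"] False \<open>k \<noteq> 0\<close> k by (simp add: t_def)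
      qed
    qed
  qed
  obtain c where lc: "length c = Suc (Suc n)" and sc: "sorted_wrt (<) c"
    and ct: "\<forall>k<Suc (Suc n). t k < c ! k \<and> c ! k < t (Suc k)" and cr: "\<forall>x\<in>set c. poly p x = 0"
    using roots_between[OF tm ts] by blast
  have pc: "p = LF c"
    using LF_unique[of c p] sc cr dp lc lp by (simp add: strict_sorted_iff)
  show ?case
  proof (intro exI conjI)
    show "P (Suc (Suc n)) = LF c" using pc p_def by simp
    show "\<forall>i<Suc n. c ! i < b ! i \<and> b ! i < c ! Suc i"
    proof (intro allI impI)
      fix i assume i: "i < Suc n"
      have "c ! i < t (Suc i)" using ct i by simp
      moreover have "t (Suc i) < c ! Suc i" using ct i by simp
      moreover have "t (Suc i) = b ! i" using i by (simp add: t_def)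
      ultimately show "c ! i < b ! i \<and> b ! i < c ! Suc i" by simp
    qed
  qed (use lb lc sb sc Pb in auto)
qed

lemma P_roots_interlace: "roots_interlace (P n) (P (Suc n))"
proof -
  obtain a b where la: "length a = n" and lb: "length b = Suc n" and sa: "sorted_wrt (<) a"
    and sb: "sorted_wrt (<) b" and Pa: "P n = LF a" and Pb: "P (Suc n) = LF b"
    and il: "\<forall>i<n. b ! i < a ! i \<and> a ! i < b ! Suc i" using P_interlace[of n] by blast
  have ma: "lead_coeff (LF a) = 1" "degree (LF a) = n" using LF_monic[of a] la by auto
  have mb: "lead_coeff (LF b) = 1" "degree (LF b) = Suc n" using LF_monic[of b] lb by auto
  show ?thesis
    unfolding roots_interlace_def Pa Pb
  proof (intro conjI exI)
    show "LF a \<noteq> 0" using ma by auto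
    show "LF b \<noteq> 0" using mb by auto
    show "degree (LF b) = degree (LF a) + 1" using ma mb by simp
    show "length a = degree (LF a)" using ma la by simp
    show "length b = degree (LF b)" using mb lb by simp
    show "sorted a" using sa by (rule strict_sorted_imp_sorted)
    show "sorted b" using sb by (rule strict_sorted_imp_sorted)
    show "LF a = smult (lead_coeff (LF a)) (\<Prod>x\<leftarrow>a. [:- x, 1:])" using ma by (simp add: LF_def)
    show "LF b = smult (lead_coeff (LF b)) (\<Prod>x\<leftarrow>b. [:- x, 1:])" using mb by (simp add: LF_def)
    show "\<forall>i<degree (LF a). b ! i \<le> a ! i \<and> a ! i \<le> b ! Suc i" using il ma by (simp add: less_imp_le)
  qed
qed


theorem theorem4p1:
  fixes \<beta> :: real
  assumes "\<beta> \<noteq> 0"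
  shows "(\<forall>p :: real poly. T_beta \<beta> p =
            (\<Sum>n\<le>degree p. smult (1 / fact n)
               (pcompose (hermite n) [:0, (\<beta> - 1) / 2:] * (pderiv ^^ n) p)))
       \<and> (\<forall>n. roots_interlace (pcompose (hermite n) [:0, (2 - 1) / 2:])
                              (pcompose (hermite (Suc n)) [:0, (2 - 1) / 2:]))"
proof (intro conjI allI)
  fix p :: "real poly"
  have ab: "2 * ((\<beta> - 1) / 2) + 1 = 2 * (\<beta> / 2)" by (simp add: field_simps)
  have "T_beta \<beta> p = TT (\<beta> / 2) (degree p) p"
    by (simp add: T_beta_def TT_def F_def)
  also have "\<dots> = SS ((\<beta> - 1) / 2) (degree p) p"
    by (rule TS[OF ab])
  finally show "T_beta \<beta> p = (\<Sum>n\<le>degree p. smult (1 / fact n)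
               (pcompose (hermite n) [:0, (\<beta> - 1) / 2:] * (pderiv ^^ n) p))"
    by (simp add: SS_def F_def)
next
  fix n
  have h: "(2 - 1) / 2 = (1 / 2 :: real)" by simp
  show "roots_interlace (pcompose (hermite n) [:0, (2 - 1) / 2:])
                              (pcompose (hermite (Suc n)) [:0, (2 - 1) / 2:])"
    using P_roots_interlace[of n] unfolding P_def h .
qed

end
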